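(* Let $\mathcal{M}$ be a uniform oriented matroid of rank $r=m-n$ on the ground set $[m]=\{1,\ldots,m\}$, with set of cocircuits $\mathcal{C}^\ast$ (uniform meaning every cocircuit has support of cardinality $m-r+1=n+1$). Identify each cocircuit $\tau$ with an $n$-dimensional face of the boundary $\partial\lozenge^m$ of the crosspolytope $\lozenge^m=\mathrm{conv}\{\pm e_1,\ldots,\pm e_m\}$, and for each $\tau\in\mathcal{C}^\ast$ let $\hat\tau$ be the $\mathbb{Z}_2$-valued simplicial cochain on $\partial\lozenge^m$ with $\hat\tau(\tau)=1$ and $\hat\tau(\theta)=0$ for every face $\theta\neq\tau$. Then the $n$-dimensional $\mathbb{Z}_2$-equivariant cochain $$ C_{\mathcal{M}}:=\sum_{\tau\in\mathcal{C}^\ast}\hat\tau\in C^n_{\mathbb{Z}_2}(\partial\lozenge^m;\mathbb{Z}_2) $$ is a cocycle representing the class $w_1^n\in H^n_{\mathbb{Z}_2}(\partial\lozenge^m;\mathbb{Z}_2)\cong H^n(\mathbb{R}P^{m-1};\mathbb{Z}_2)$, where $w_1$ is the first Stiefel–Whitney class of the free $\mathbb{Z}_2$-space $\partial\lozenge^m\cong S^{m-1}$ (antipodal action).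
   Context: A cocircuit $X\in\{0,+,-\}^m$ is identified with the face $\mathrm{conv}\{\,\mathrm{sign}(X_i)e_i : X_i\neq0\,\}$ of $\lozenge^m$, where $+e_i$ and $-e_i$ correspond to signs $+$ and $-$. The simplicial complex $\partial\lozenge^m$ carries the free involution $x\mapsto -x$; $\mathbb{Z}_2$-equivariant (invariant) cochains are identified with cochains on the quotient $\partial\lozenge^m/\mathbb{Z}_2\cong\mathbb{R}P^{m-1}$, and $w_1$ is the first Stiefel–Whitney class of the double cover $S^{m-1}\to\mathbb{R}P^{m-1}$ (the generator of $H^1(\mathbb{R}P^{m-1};\mathbb{Z}_2)$). *)

theory Defs
  imports Main "HOL-Library.Z2"
begin

(* Sign vectors on the ground set [m] = {1..m}: functions nat => int with values in
   {-1,0,1} (0 <-> sign 0, 1 <-> +, -1 <-> -), vanishing outside {1..m}. *)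
definition signvec :: "nat \<Rightarrow> (nat \<Rightarrow> int) set" where
  "signvec m = {X. (\<forall>i. X i \<in> {-1, 0, 1}) \<and> (\<forall>i. i \<notin> {1..m} \<longrightarrow> X i = 0)}"

definition supp :: "(nat \<Rightarrow> int) \<Rightarrow> nat set" where
  "supp X = {i. X i \<noteq> 0}"

definition negv :: "(nat \<Rightarrow> int) \<Rightarrow> (nat \<Rightarrow> int)" where
  "negv X = (\<lambda>i. - X i)"

definition posp :: "(nat \<Rightarrow> int) \<Rightarrow> nat set" where
  "posp X = {i. X i = 1}"

definition negp :: "(nat \<Rightarrow> int) \<Rightarrow> nat set" where
  "negp X = {i. X i = -1}"

(* The cocircuits of an
   oriented matroid are the circuits of its dual, so they are characterised by the
   (signed) circuit axioms (C0)-(C3) of Bjoerner et al. *)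
definition oriented_matroid_cocircuits :: "nat \<Rightarrow> (nat \<Rightarrow> int) set \<Rightarrow> bool" where
  "oriented_matroid_cocircuits m C \<longleftrightarrow>
     C \<subseteq> signvec m \<and>
     (\<lambda>i. 0) \<notin> C \<and>
     (\<forall>X\<in>C. negv X \<in> C) \<and>
     (\<forall>X\<in>C. \<forall>Y\<in>C. supp X \<subseteq> supp Y \<longrightarrow> X = Y \<or> X = negv Y) \<and>
     (\<forall>X\<in>C. \<forall>Y\<in>C. \<forall>e. X \<noteq> negv Y \<and> e \<in> posp X \<inter> negp Y \<longrightarrow>
        (\<exists>Z\<in>C. posp Z \<subseteq> posp X \<union> posp Y \<and> negp Z \<subseteq> negp X \<union> negp Y \<and> e \<notin> supp Z))"

(* Uniform of rank r: underlying matroid is U_{r,m}, whose cocircuits are exactly the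
   (m-r+1)-subsets of [m]. *)
definition uniform_rank :: "nat \<Rightarrow> nat \<Rightarrow> (nat \<Rightarrow> int) set \<Rightarrow> bool" where
  "uniform_rank m r C \<longleftrightarrow>
     supp ` C = {A. A \<subseteq> {1..m} \<and> card A = m - r + 1}"

(* Faces of the boundary of the crosspolytope: nonzero sign vector X <-> face
   conv{sign(X_i) e_i : X_i \<noteq> 0}, of dimension |supp X| - 1. *)
definition faces :: "nat \<Rightarrow> nat \<Rightarrow> (nat \<Rightarrow> int) set" where
  "faces m k = {X \<in> signvec m. card (supp X) = Suc k}"

definition restr :: "(nat \<Rightarrow> int) \<Rightarrow> nat set \<Rightarrow> (nat \<Rightarrow> int)" where
  "restr X A = (\<lambda>i. if i \<in> A then X i else 0)"

definition facets :: "(nat \<Rightarrow> int) \<Rightarrow> (nat \<Rightarrow> int) set" where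
  "facets X = {restr X (supp X - {i}) | i. i \<in> supp X}"

(* Z_2-valued cochains: functions from faces to Z_2 (only values on faces of the
   relevant dimension matter). *)
type_synonym cochain = "(nat \<Rightarrow> int) \<Rightarrow> bit"

definition coboundary :: "cochain \<Rightarrow> cochain" where
  "coboundary c X = (\<Sum>T\<in>facets X. c T)"

(* Z_2-equivariant (invariant) cochains = cochains on the quotient RP^{m-1} *)
definition equivariant :: "cochain \<Rightarrow> bool" where
  "equivariant c \<longleftrightarrow> (\<forall>X. c (negv X) = c X)"

definition is_cocycle :: "nat \<Rightarrow> nat \<Rightarrow> cochain \<Rightarrow> bool" where
  "is_cocycle m k c \<longleftrightarrow> (\<forall>X\<in>faces m (Suc k). coboundary c X = 0)"

(* a and b (k-cochains) represent the same class in H^k_{Z_2}(boundary crosspolytope; Z_2):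
   their difference is the coboundary of an equivariant (k-1)-cochain (nothing for k=0). *)
definition equiv_cohomologous :: "nat \<Rightarrow> nat \<Rightarrow> cochain \<Rightarrow> cochain \<Rightarrow> bool" where
  "equiv_cohomologous m k a b \<longleftrightarrow>
     (\<exists>c. equivariant c \<and>
        (\<forall>X\<in>faces m k. a X - b X = (if k = 0 then 0 else coboundary c X)))"

(* Cup product of equivariant cochains, computed on the quotient Delta-complex
   RP^{m-1} = boundary/Z_2 with its vertices (the orbits {+e_i,-e_i}) ordered by i:
   (a \<union> b)(X) = a(front p-face) * b(back face). *)
definition cup :: "nat \<Rightarrow> cochain \<Rightarrow> cochain \<Rightarrow> cochain" where
  "cup p a b X =
     (let l = sorted_list_of_set (supp X) in
        a (restr X (set (take (Suc p) l))) * b (restr X (set (drop p l))))"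

(* Representative of w_1 of the double cover S^{m-1} -> RP^{m-1}: with the section
   i |-> +e_i of the vertex orbits, an edge is sent to 1 iff its lift starting at +e_i
   ends at -e_j, i.e. iff its two vertices carry opposite signs. *)
definition w1 :: cochain where
  "w1 X = (if card (supp X) = 2 \<and> (\<exists>i j. X i = 1 \<and> X j = -1) then 1 else 0)"

fun w1_pow :: "nat \<Rightarrow> cochain" where
  "w1_pow 0 = (\<lambda>X. 1)"
| "w1_pow (Suc k) = cup k (w1_pow k) w1"

definition hat :: "(nat \<Rightarrow> int) \<Rightarrow> cochain" where
  "hat T = (\<lambda>X. if X = T then 1 else 0)"

definition C_M :: "(nat \<Rightarrow> int) set \<Rightarrow> cochain" where
  "C_M C = (\<lambda>X. \<Sum>T\<in>C. hat T X)"

end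

theory Submission
  imports Defs "HOL-Library.FuncSet"
begin
definition sv :: "nat set \<Rightarrow> (nat \<Rightarrow> int) \<Rightarrow> bool" where
  "sv V X \<longleftrightarrow> (\<forall>i. X i \<in> {-1,0,1}) \<and> supp X \<subseteq> V"

definition cob :: "cochain \<Rightarrow> cochain" where
  "cob c X = (\<Sum>i\<in>supp X. c (X(i:=0)))"

lemma bit_add_self[simp]: "(x::bit) + x = 0"
  by (cases x) simp_all

lemma restr_del: "restr X (supp X - {i}) = X(i:=0)"
  by (auto simp: restr_def supp_def fun_eq_iff)

lemma facets_eq: "facets X = (\<lambda>i. X(i:=0)) ` supp X"
  unfolding facets_def restr_del by auto

lemma inj_del: "inj_on (\<lambda>i. X(i:=0)) (supp X)"
proof (rule inj_onI)
  fix i j assume "i \<in> supp X" "j \<in> supp X" "X(i:=0) = X(j:=0)"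
  then have "(X(i:=0)) i = (X(j:=0)) i" by simp
  then show "i = j" using \<open>i \<in> supp X\<close> by (auto simp: supp_def split: if_splits)
qed

lemma coboundary_cob: "coboundary c X = cob c X"
  unfolding coboundary_def cob_def facets_eq
  by (simp add: sum.reindex[OF inj_del])

lemma supp_upd: "supp (X(i:=v)) = (if v = 0 then supp X - {i} else insert i (supp X))"
  by (auto simp: supp_def)

lemma supp_upd0[simp]: "supp (X(i:=0)) = supp X - {i}"
  by (auto simp: supp_def)

lemma sv_finite_supp: "finite V \<Longrightarrow> sv V X \<Longrightarrow> finite (supp X)"
  unfolding sv_def using finite_subset by blast

lemma finite_sv: assumes "finite V" shows "finite {X. sv V X}"
proof -
  have "inj_on (\<lambda>X. restrict X V) {X. sv V X}"
  proof (rule inj_onI)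
    fix X Y assume "X \<in> {X. sv V X}" "Y \<in> {X. sv V X}" "restrict X V = restrict Y V"
    then show "X = Y" unfolding sv_def supp_def restrict_def
      by (auto simp: fun_eq_iff) (metis (mono_tags, lifting) mem_Collect_eq subsetD)
  qed
  moreover have "(\<lambda>X. restrict X V) ` {X. sv V X} \<subseteq> PiE V (\<lambda>_. {-1,0,1})"
    unfolding sv_def by auto
  moreover have "finite (PiE V (\<lambda>_. {-1::int,0,1}))"
    using assms by (simp add: finite_PiE)
  ultimately show ?thesis
    by (meson finite_imageD finite_subset)
qed

lemma dsum_sym:
  assumes "finite S" "\<And>i j. f i j = f j i"
  shows "(\<Sum>i\<in>S. \<Sum>j\<in>S-{i}. f i j) = (0::bit)"
  using assms(1)
proof (induction S rule: finite_induct)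
  case empty then show ?case by simp
next
  case (insert a S)
  have 1: "(\<Sum>i\<in>insert a S. \<Sum>j\<in>insert a S-{i}. f i j)
      = (\<Sum>j\<in>S. f a j) + (\<Sum>i\<in>S. \<Sum>j\<in>insert a S-{i}. f i j)"
    using insert by (simp add: insert_Diff_if)
  have "(\<Sum>i\<in>S. \<Sum>j\<in>insert a S-{i}. f i j) = (\<Sum>i\<in>S. f i a + (\<Sum>j\<in>S-{i}. f i j))"
  proof (rule sum.cong)
    fix i assume "i \<in> S"
    then have "insert a S - {i} = insert a (S - {i})" "a \<notin> S - {i}" using insert by auto
    then show "(\<Sum>j\<in>insert a S-{i}. f i j) = f i a + (\<Sum>j\<in>S-{i}. f i j)"
      using insert by simp
  qed simp
  also have "\<dots> = (\<Sum>i\<in>S. f i a) + (\<Sum>i\<in>S. \<Sum>j\<in>S-{i}. f i j)"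
    by (rule sum.distrib)
  also have "\<dots> = (\<Sum>i\<in>S. f i a)" using insert.IH by simp
  finally have 2: "(\<Sum>i\<in>S. \<Sum>j\<in>insert a S-{i}. f i j) = (\<Sum>i\<in>S. f a i)"
    using assms(2) by simp
  show ?case unfolding 1 2 by simp
qed

lemma cobcob: assumes "finite (supp X)" shows "cob (cob c) X = 0"
proof -
  have "cob (cob c) X = (\<Sum>i\<in>supp X. \<Sum>j\<in>supp X-{i}. c ((X(i:=0))(j:=0)))"
    unfolding cob_def by simp
  also have "\<dots> = 0"
    by (rule dsum_sym[OF assms]) (metis fun_upd_twist fun_upd_upd)
  finally show ?thesis .
qed

lemma negv_upd: "negv (X(i:=0)) = (negv X)(i:=0)"
  by (auto simp: negv_def fun_eq_iff)

lemma supp_negv[simp]: "supp (negv X) = supp X"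
  by (auto simp: supp_def negv_def)

lemma equivariant_cob: "equivariant c \<Longrightarrow> equivariant (cob c)"
  unfolding equivariant_def cob_def by (simp add: negv_upd[symmetric])

lemma cob_add: "cob (\<lambda>X. f X + g X) Y = cob f Y + cob g Y"
  unfolding cob_def by (rule sum.distrib)

lemma sv_out: "sv V X \<Longrightarrow> w \<notin> V \<Longrightarrow> X w = 0"
  unfolding sv_def supp_def by auto

lemma sv_vals: "sv V X \<Longrightarrow> X i \<in> {-1,0,1}"
  unfolding sv_def by auto

lemma sv_mono: "sv V X \<Longrightarrow> V \<subseteq> V' \<Longrightarrow> sv V' X"
  unfolding sv_def by auto

lemma sv_upd: "sv V X \<Longrightarrow> v \<in> {-1,0,1} \<Longrightarrow> sv (insert w V) (X(w:=v))"
  unfolding sv_def supp_def by auto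

lemma sv_del: "sv (insert w V) X \<Longrightarrow> sv V (X(w:=0))"
  unfolding sv_def supp_def by auto

lemma sv_del2: "sv V X \<Longrightarrow> sv V (X(w:=0))"
  unfolding sv_def supp_def by auto

lemma card_supp_upd:
  assumes "finite (supp X)" "X w = 0" "v \<noteq> 0"
  shows "card (supp (X(w:=v))) = Suc (card (supp X))"
proof -
  have "supp (X(w:=v)) = insert w (supp X)" "w \<notin> supp X"
    using assms by (auto simp: supp_def)
  then show ?thesis using assms(1) by simp
qed

lemma supp_empty_iff: "supp X = {} \<longleftrightarrow> X = (\<lambda>_. 0)"
  by (auto simp: supp_def fun_eq_iff)

lemma reidx:
  assumes "w \<notin> W" "v \<in> {-1,1}"
  shows "(\<Sum>U\<in>{U. sv W U \<and> supp U = W}. h (U(w:=v)))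
       = (\<Sum>X\<in>{X. sv (insert w W) X \<and> supp X = insert w W \<and> X w = v}. h X)"
proof -
  let ?A = "{U. sv W U \<and> supp U = W}"
  let ?B = "{X. sv (insert w W) X \<and> supp X = insert w W \<and> X w = v}"
  have inj: "inj_on (\<lambda>U. U(w:=v)) ?A"
  proof (rule inj_onI)
    fix U U' assume "U \<in> ?A" "U' \<in> ?A" "U(w:=v) = U'(w:=v)"
    then have "U w = 0" "U' w = 0" using assms sv_out by auto
    then show "U = U'" using \<open>U(w:=v) = U'(w:=v)\<close>
      by (metis fun_upd_triv fun_upd_upd)
  qed
  have img: "(\<lambda>U. U(w:=v)) ` ?A = ?B"
  proof
    show "(\<lambda>U. U(w:=v)) ` ?A \<subseteq> ?B"
    proof
      fix X assume "X \<in> (\<lambda>U. U(w:=v)) ` ?A"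
      then obtain U where U: "sv W U" "supp U = W" "X = U(w:=v)" by auto
      have "U w = 0" using U assms sv_out by auto
      have "sv (insert w W) X" using U sv_upd assms by auto
      moreover have "supp X = insert w W" using U assms by (auto simp: supp_def)
      ultimately show "X \<in> ?B" using U by simp
    qed
  next
    show "?B \<subseteq> (\<lambda>U. U(w:=v)) ` ?A"
    proof
      fix X assume X: "X \<in> ?B"
      then have "X = (X(w:=0))(w:=v)" by auto
      moreover have "X(w:=0) \<in> ?A" using X assms sv_del by auto
      ultimately show "X \<in> (\<lambda>U. U(w:=v)) ` ?A" by blast
    qed
  qed
  show ?thesis
    using sum.reindex[OF inj, of h] img by simp
qed

lemma sum_del_split:
  assumes "finite (supp X)" "w \<in> supp X"
  shows "cob c X = c (X(w:=0)) + (\<Sum>i\<in>supp X - {w}. c (X(i:=0)))"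
  unfolding cob_def using assms by (simp add: sum.remove)

lemma SL:
  assumes "finite W"
  shows "s \<le> card W \<Longrightarrow> (\<And>Y. sv W Y \<Longrightarrow> card (supp Y) = Suc s \<Longrightarrow> cob F Y = 0)
    \<Longrightarrow> (s = card W \<Longrightarrow> (\<Sum>X\<in>{X. sv W X \<and> supp X = W}. F X) = 0)
    \<Longrightarrow> \<exists>c. \<forall>X. sv W X \<longrightarrow> card (supp X) = s \<longrightarrow> F X = cob c X"
  using assms
proof (induction W arbitrary: s F rule: finite_induct)
  case empty
  have s0: "s = 0" using empty by simp
  have "{X. sv {} X \<and> supp X = {}} = {(\<lambda>_. 0)}"
    by (auto simp: sv_def supp_empty_iff)
  then have "F (\<lambda>_. 0) = 0" using empty s0 by simp
  then show ?case
    by (intro exI[of _ "\<lambda>_. 0"]) (auto simp: sv_def supp_empty_iff cob_def)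
next
  case (insert w W)
  have fin: "finite (insert w W)" using insert by simp
  show ?case
  proof (cases s)
    case 0
    let ?Z = "(\<lambda>_. 0::int)"
    have "sv (insert w W) (?Z(w:=1))" by (auto simp: sv_def supp_def)
    moreover have "supp (?Z(w:=1)) = {w}" by (auto simp: supp_def)
    ultimately have "cob F (?Z(w:=1)) = 0" using insert.prems(2)[of "?Z(w:=1)"] 0 by (simp del: fun_upd_apply)
    then have "F ((?Z(w:=1))(w:=0)) = 0" unfolding cob_def by (simp add: \<open>supp (?Z(w:=1)) = {w}\<close>)
    moreover have "(?Z(w:=1))(w:=0) = ?Z" by (simp add: fun_eq_iff)
    ultimately have "F ?Z = 0" by simp
    show ?thesis
    proof (intro exI[of _ "\<lambda>_. 0"] allI impI)
      fix X assume "sv (insert w W) X" "card (supp X) = s"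
      then have "supp X = {}" using 0 sv_finite_supp[OF fin] by auto
      then show "F X = cob (\<lambda>_. 0) X" using \<open>F ?Z = 0\<close> by (simp add: supp_empty_iff cob_def)
    qed
  next
    case (Suc s')
    define c1 where "c1 X = (if X w = 0 then F (X(w:=1)) else 0)" for X
    define F' where "F' X = F X + cob c1 X" for X
    have claim0: "F' X = 0" if X: "sv (insert w W) X" "card (supp X) = s" "X w \<noteq> -1" for X
    proof -
      have finX: "finite (supp X)" using sv_finite_supp[OF fin X(1)] .
      consider "X w = 0" | "X w = 1" using X sv_vals[OF X(1), of w] by auto
      then show ?thesis
      proof cases
        case 1
        let ?Y = "X(w:=1)"
        have svY: "sv (insert w W) ?Y" using sv_upd[OF X(1), of 1 w] by simp
        have cY: "card (supp ?Y) = Suc s" using card_supp_upd[OF finX 1] X(2) by simp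
        have "cob F ?Y = 0" using insert.prems(2)[OF svY cY] .
        moreover have wY: "w \<in> supp ?Y" by (simp add: supp_def)
        moreover have "finite (supp ?Y)" using sv_finite_supp[OF fin svY] .
        ultimately have "F (?Y(w:=0)) + (\<Sum>i\<in>supp ?Y - {w}. F (?Y(i:=0))) = 0"
          using sum_del_split by metis
        moreover have "?Y(w:=0) = X" using 1 by auto
        moreover have "supp ?Y - {w} = supp X" using 1 by (auto simp: supp_def)
        moreover have "(\<Sum>i\<in>supp X. F (?Y(i:=0))) = cob c1 X"
          unfolding cob_def
        proof (rule sum.cong)
          fix i assume "i \<in> supp X"
          then have "i \<noteq> w" using 1 by (auto simp: supp_def)
          then show "F (?Y(i:=0)) = c1 (X(i:=0))"
            unfolding c1_def using 1 by (simp add: fun_upd_twist)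
        qed simp
        ultimately show ?thesis unfolding F'_def by simp
      next
        case 2
        have wX: "w \<in> supp X" using 2 by (simp add: supp_def)
        have "cob c1 X = c1 (X(w:=0)) + (\<Sum>i\<in>supp X - {w}. c1 (X(i:=0)))"
          using sum_del_split[OF finX wX] .
        moreover have "(\<Sum>i\<in>supp X - {w}. c1 (X(i:=0))) = 0"
          by (rule sum.neutral) (auto simp: c1_def 2)
        moreover have "c1 (X(w:=0)) = F X" unfolding c1_def using 2
          by (simp add: fun_upd_idem)
        ultimately show ?thesis unfolding F'_def by simp
      qed
    qed
    have cocF': "cob F' Z = 0" if Z: "sv (insert w W) Z" "card (supp Z) = Suc s" for Z
    proof -
      have "cob F' Z = cob F Z + cob (cob c1) Z" unfolding F'_def by (rule cob_add)
      also have "\<dots> = 0" using insert.prems(2)[OF Z] cobcob[OF sv_finite_supp[OF fin Z(1)]] by simp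
      finally show ?thesis .
    qed
    define G where "G U = F' (U(w:=-1))" for U
    have cocG: "cob G Y = 0" if Y: "sv W Y" "card (supp Y) = Suc s'" for Y
    proof -
      let ?Z = "Y(w:=-1)"
      have Yw: "Y w = 0" using sv_out[OF Y(1) insert(2)] .
      have finY: "finite (supp Y)" using sv_finite_supp[OF insert(1) Y(1)] .
      have svZ: "sv (insert w W) ?Z" using sv_upd[OF Y(1), of "-1" w] by simp
      have cZ: "card (supp ?Z) = Suc s" using card_supp_upd[OF finY Yw, of "-1"] Y(2) Suc by simp
      have wZ: "w \<in> supp ?Z" by (simp add: supp_def)
      have "0 = cob F' ?Z" using cocF'[OF svZ cZ] by simp
      also have "\<dots> = F' (?Z(w:=0)) + (\<Sum>i\<in>supp ?Z - {w}. F' (?Z(i:=0)))"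
        using sum_del_split[OF sv_finite_supp[OF fin svZ] wZ] .
      also have "?Z(w:=0) = Y" using Yw by auto
      also have "F' Y = 0"
        using claim0[OF sv_mono[OF Y(1)] _] Y(2) Suc Yw by auto
      also have "supp ?Z - {w} = supp Y" using Yw by (auto simp: supp_def)
      also have "(\<Sum>i\<in>supp Y. F' (?Z(i:=0))) = cob G Y"
        unfolding cob_def G_def
      proof (rule sum.cong)
        fix i assume "i \<in> supp Y"
        then have "i \<noteq> w" using Yw by (auto simp: supp_def)
        then show "F' (?Z(i:=0)) = F' ((Y(i:=0))(w:=-1))" by (simp add: fun_upd_twist)
      qed simp
      finally show ?thesis by simp
    qed
    have topG: "(\<Sum>U\<in>{U. sv W U \<and> supp U = W}. G U) = 0" if "s' = card W"
    proof -
      let ?N = "{X. sv (insert w W) X \<and> supp X = insert w W \<and> X w = -1}"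
      let ?P = "{X. sv (insert w W) X \<and> supp X = insert w W \<and> X w = 1}"
      let ?Full = "{X. sv (insert w W) X \<and> supp X = insert w W}"
      have sc: "s = card (insert w W)" using that Suc insert by simp
      have finFull: "finite ?Full" using finite_sv[OF fin] by (rule finite_subset[rotated]) auto
      have "(\<Sum>U\<in>{U. sv W U \<and> supp U = W}. G U) = (\<Sum>X\<in>?N. F' X)"
        unfolding G_def by (rule reidx) (use insert in auto)
      also have "\<dots> = (\<Sum>X\<in>?N. F X + F (X(w:=1)))"
      proof (rule sum.cong)
        fix X assume X: "X \<in> ?N"
        have finX: "finite (supp X)" using X insert(1) by simp
        have wX: "w \<in> supp X" using X by simp
        have "cob c1 X = c1 (X(w:=0)) + (\<Sum>i\<in>supp X - {w}. c1 (X(i:=0)))"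
          using sum_del_split[OF finX wX] .
        moreover have "(\<Sum>i\<in>supp X - {w}. c1 (X(i:=0))) = 0"
          by (rule sum.neutral) (use X in \<open>auto simp: c1_def\<close>)
        moreover have "c1 (X(w:=0)) = F (X(w:=1))" unfolding c1_def by simp
        ultimately show "F' X = F X + F (X(w:=1))" unfolding F'_def by simp
      qed simp
      also have "\<dots> = (\<Sum>X\<in>?N. F X) + (\<Sum>X\<in>?N. F (X(w:=1)))" by (rule sum.distrib)
      also have "(\<Sum>X\<in>?N. F (X(w:=1))) = (\<Sum>X\<in>?P. F X)"
      proof -
        have "(\<Sum>X\<in>?N. F (X(w:=1))) = (\<Sum>U\<in>{U. sv W U \<and> supp U = W}. F ((U(w:=-1))(w:=1)))"
          by (rule reidx[symmetric]) (use insert in auto)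
        also have "\<dots> = (\<Sum>U\<in>{U. sv W U \<and> supp U = W}. F (U(w:=1)))" by simp
        also have "\<dots> = (\<Sum>X\<in>?P. F X)" by (rule reidx) (use insert in auto)
        finally show ?thesis .
      qed
      also have "(\<Sum>X\<in>?N. F X) + (\<Sum>X\<in>?P. F X) = (\<Sum>X\<in>?Full. F X)"
      proof -
        have "?Full = ?N \<union> ?P"
        proof
          show "?Full \<subseteq> ?N \<union> ?P"
          proof
            fix X assume X: "X \<in> ?Full"
            then have "X w \<noteq> 0" by (auto simp: supp_def)
            then show "X \<in> ?N \<union> ?P" using X sv_vals[of "insert w W" X w] by auto
          qed
        qed auto
        moreover have "?N \<inter> ?P = {}" by auto
        moreover have "finite ?N" "finite ?P" using finFull by (auto intro: finite_subset[rotated])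
        ultimately show ?thesis by (simp add: sum.union_disjoint)
      qed
      also have "\<dots> = 0" using insert.prems(3) sc by simp
      finally show ?thesis .
    qed
    have "s' \<le> card W" using insert Suc by simp
    then obtain g where g: "\<forall>U. sv W U \<longrightarrow> card (supp U) = s' \<longrightarrow> G U = cob g U"
      using insert.IH[of s' G] cocG topG by blast
    define c where "c X = c1 X + (if X w = -1 then g (X(w:=0)) else 0)" for X
    show ?thesis
    proof (intro exI[of _ c] allI impI)
      fix X assume X: "sv (insert w W) X" "card (supp X) = s"
      have finX: "finite (supp X)" using sv_finite_supp[OF fin X(1)] .
      define c2 where "c2 X = (if X w = -1 then g (X(w:=0)) else 0)" for X
      have cc: "c = (\<lambda>X. c1 X + c2 X)" unfolding c_def c2_def by auto
      have "F' X = cob c2 X"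
      proof (cases "X w = -1")
        case True
        have wX: "w \<in> supp X" using True by (simp add: supp_def)
        have "cob c2 X = c2 (X(w:=0)) + (\<Sum>i\<in>supp X - {w}. c2 (X(i:=0)))"
          using sum_del_split[OF finX wX] .
        also have "c2 (X(w:=0)) = 0" unfolding c2_def by simp
        also have "(\<Sum>i\<in>supp X - {w}. c2 (X(i:=0))) = cob g (X(w:=0))"
          unfolding cob_def supp_upd0
        proof (rule sum.cong)
          fix i assume "i \<in> supp X - {w}"
          then show "c2 (X(i:=0)) = g ((X(w:=0))(i:=0))"
            unfolding c2_def using True by (simp add: fun_upd_twist)
        qed simp
        also have "cob g (X(w:=0)) = G (X(w:=0))"
        proof -
          have "sv W (X(w:=0))" using sv_del[OF X(1)] .
          moreover have "card (supp (X(w:=0))) = s'" using X(2) Suc finX wX by simp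
          ultimately show ?thesis using g by simp
        qed
        also have "G (X(w:=0)) = F' X" unfolding G_def using True by (simp add: fun_upd_idem)
        finally show ?thesis by simp
      next
        case False
        have "cob c2 X = 0" unfolding cob_def
          by (rule sum.neutral) (use False in \<open>auto simp: c2_def\<close>)
        then show ?thesis using claim0[OF X False] by simp
      qed
      then have "F X = cob c1 X + cob c2 X" unfolding F'_def
        by (metis add.assoc bit_add_self add_0)
      then show "F X = cob c X" unfolding cc cob_add by simp
    qed
  qed
qed

definition scl :: "int \<Rightarrow> (nat \<Rightarrow> int) \<Rightarrow> (nat \<Rightarrow> int)" where
  "scl s X = (\<lambda>i. s * X i)"

lemma negv_negv[simp]: "negv (negv X) = X"
  by (simp add: negv_def)

lemma sv_negv: "sv V X \<Longrightarrow> sv V (negv X)"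
  unfolding sv_def supp_negv by (auto simp: negv_def)

lemma pairing:
  assumes "equivariant f" "finite V" "a \<in> A"
  shows "(\<Sum>X\<in>{X. sv V X \<and> supp X = A}. f X) = 0"
proof -
  let ?S = "{X. sv V X \<and> supp X = A}"
  let ?P = "{X. sv V X \<and> supp X = A \<and> X a = 1}"
  let ?N = "{X. sv V X \<and> supp X = A \<and> X a = -1}"
  have finS: "finite ?S" using finite_sv[OF assms(2)] by (rule finite_subset[rotated]) auto
  have S: "?S = ?P \<union> ?N"
  proof
    show "?S \<subseteq> ?P \<union> ?N"
    proof
      fix X assume X: "X \<in> ?S"
      then have "X a \<noteq> 0" using assms(3) by (auto simp: supp_def)
      then show "X \<in> ?P \<union> ?N" using X sv_vals[of V X a] by auto
    qed
  qed auto
  have inj: "inj_on negv ?P" by (rule inj_on_inverseI[of _ negv]) simp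
  have img: "negv ` ?P = ?N"
  proof
    show "negv ` ?P \<subseteq> ?N" by (auto simp: sv_negv) (simp add: negv_def)
    show "?N \<subseteq> negv ` ?P"
    proof
      fix X assume X: "X \<in> ?N"
      have "sv V (negv X)" using X sv_negv by auto
      moreover have "supp (negv X) = A" using X by simp
      moreover have "(negv X) a = 1" using X by (simp add: negv_def)
      ultimately have "negv X \<in> ?P" by simp
      then have "negv (negv X) \<in> negv ` ?P" by (rule imageI)
      then show "X \<in> negv ` ?P" by simp
    qed
  qed
  have "(\<Sum>X\<in>?N. f X) = (\<Sum>X\<in>?P. f (negv X))"
    using sum.reindex[OF inj, of f] img by simp
  also have "\<dots> = (\<Sum>X\<in>?P. f X)" using assms(1) by (simp add: equivariant_def)
  finally have NP: "(\<Sum>X\<in>?N. f X) = (\<Sum>X\<in>?P. f X)" .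
  have "?P \<inter> ?N = {}" by auto
  moreover have "finite ?P" "finite ?N" using finS by (auto intro: finite_subset[rotated])
  ultimately have "(\<Sum>X\<in>?S. f X) = (\<Sum>X\<in>?P. f X) + (\<Sum>X\<in>?N. f X)"
    unfolding S by (simp add: sum.union_disjoint)
  then show ?thesis using NP by simp
qed

lemma card_supp_le: "finite V \<Longrightarrow> sv V X \<Longrightarrow> card (supp X) \<le> card V"
  unfolding sv_def by (simp add: card_mono)

lemma EL:
  assumes "finite V" "1 \<le> n" "equivariant E"
  shows "(\<And>Y. sv V Y \<Longrightarrow> card (supp Y) = n+2 \<Longrightarrow> cob E Y = 0)
    \<Longrightarrow> (\<And>A a. A \<subseteq> V \<Longrightarrow> card A = n+1 \<Longrightarrow> a \<in> A \<Longrightarrow>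
          (\<Sum>X\<in>{X. sv V X \<and> supp X = A \<and> X a = 1}. E X) = 0)
    \<Longrightarrow> \<exists>c. equivariant c \<and> (\<forall>X. sv V X \<longrightarrow> card (supp X) = n+1 \<longrightarrow> E X = cob c X)"
  using assms(1)
proof (induction V rule: finite_induct)
  case empty
  show ?case
  proof (intro exI[of _ "\<lambda>_. 0"] conjI allI impI)
    show "equivariant (\<lambda>_. 0)" by (simp add: equivariant_def)
    fix X assume "sv {} X" "card (supp X) = n+1"
    then show "E X = cob (\<lambda>_. 0) X" using card_supp_le[of "{}" X] by simp
  qed
next
  case (insert v V)
  have fin: "finite (insert v V)" using insert by simp
  show ?case
  proof (cases "n \<le> card V")
    case False
    show ?thesis
    proof (intro exI[of _ "\<lambda>_. 0"] conjI allI impI)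
      show "equivariant (\<lambda>_. 0)" by (simp add: equivariant_def)
      fix X assume "sv (insert v V) X" "card (supp X) = n+1"
      then show "E X = cob (\<lambda>_. 0) X" using card_supp_le[OF fin, of X] False insert by simp
    qed
  next
    case True
    have "\<exists>c. equivariant c \<and> (\<forall>X. sv V X \<longrightarrow> card (supp X) = n+1 \<longrightarrow> E X = cob c X)"
    proof (rule insert.IH)
      fix Y assume "sv V Y" "card (supp Y) = n+2"
      then show "cob E Y = 0" using insert.prems(1) sv_mono by blast
    next
      fix A a assume A: "A \<subseteq> V" "card A = n+1" "a \<in> A"
      have "{X. sv V X \<and> supp X = A \<and> X a = 1} = {X. sv (insert v V) X \<and> supp X = A \<and> X a = 1}"
        using A(1) by (auto simp: sv_def)
      then show "(\<Sum>X\<in>{X. sv V X \<and> supp X = A \<and> X a = 1}. E X) = 0"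
        using insert.prems(2)[of A a] A by auto
    qed
    then obtain c' where c': "equivariant c'"
      "\<And>X. sv V X \<Longrightarrow> card (supp X) = n+1 \<Longrightarrow> E X = cob c' X" by blast
    define c0 where "c0 X = (if X v = 0 then c' X else 0)" for X
    have eq0: "equivariant c0" using c'(1) unfolding equivariant_def c0_def by (simp add: negv_def)
    define E1 where "E1 X = E X + cob c0 X" for X
    have eqE1: "equivariant E1" using assms(3) equivariant_cob[OF eq0]
      unfolding equivariant_def E1_def by simp
    have E1zero: "E1 X = 0" if X: "sv V X" "card (supp X) = n+1" for X
    proof -
      have Xv: "X v = 0" using sv_out[OF X(1) insert(2)] .
      have "cob c0 X = cob c' X" unfolding cob_def
        by (rule sum.cong) (auto simp: c0_def Xv)
      then show ?thesis unfolding E1_def using c'(2)[OF X] by simp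
    qed
    define F where "F U = E1 (U(v:=1))" for U
    have cocF: "cob F Y = 0" if Y: "sv V Y" "card (supp Y) = Suc n" for Y
    proof -
      let ?Z = "Y(v:=1)"
      have Yv: "Y v = 0" using sv_out[OF Y(1) insert(2)] .
      have finY: "finite (supp Y)" using sv_finite_supp[OF insert(1) Y(1)] .
      have svZ: "sv (insert v V) ?Z" using sv_upd[OF Y(1), of 1 v] by simp
      have cZ: "card (supp ?Z) = n+2" using card_supp_upd[OF finY Yv, of 1] Y(2) by simp
      have vZ: "v \<in> supp ?Z" by (simp add: supp_def)
      have "cob E1 ?Z = cob E ?Z + cob (cob c0) ?Z" unfolding E1_def by (rule cob_add)
      also have "\<dots> = 0"
      proof -
        have h1: "cob E ?Z = 0" by (rule insert.prems(1)[OF svZ cZ])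
        have h2: "cob (cob c0) ?Z = 0" by (rule cobcob[OF sv_finite_supp[OF fin svZ]])
        show ?thesis unfolding h1 h2 by simp
      qed
      finally have "0 = cob E1 ?Z" by simp
      also have "\<dots> = E1 (?Z(v:=0)) + (\<Sum>i\<in>supp ?Z - {v}. E1 (?Z(i:=0)))"
        using sum_del_split[OF sv_finite_supp[OF fin svZ] vZ] .
      also have "?Z(v:=0) = Y" using Yv by auto
      also have "E1 Y = 0" using E1zero[OF Y(1)] Y(2) by simp
      also have "supp ?Z - {v} = supp Y" using Yv by (auto simp: supp_def)
      also have "(\<Sum>i\<in>supp Y. E1 (?Z(i:=0))) = cob F Y"
        unfolding cob_def F_def
      proof (rule sum.cong)
        fix i assume "i \<in> supp Y"
        then have "i \<noteq> v" using Yv by (auto simp: supp_def)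
        then show "E1 (?Z(i:=0)) = E1 ((Y(i:=0))(v:=1))" by (simp add: fun_upd_twist)
      qed simp
      finally show ?thesis by simp
    qed
    have topF: "(\<Sum>U\<in>{U. sv V U \<and> supp U = V}. F U) = 0" if nV: "n = card V"
    proof -
      let ?P = "{X. sv (insert v V) X \<and> supp X = insert v V \<and> X v = 1}"
      let ?S = "{U. sv V U \<and> supp U = V}"
      have "(\<Sum>U\<in>?S. F U) = (\<Sum>X\<in>?P. E1 X)"
        unfolding F_def by (rule reidx) (use insert in auto)
      also have "\<dots> = (\<Sum>X\<in>?P. E X) + (\<Sum>X\<in>?P. cob c0 X)"
        unfolding E1_def by (rule sum.distrib)
      also have "(\<Sum>X\<in>?P. E X) = 0"
        using insert.prems(2)[of "insert v V" v] nV insert by simp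
      also have "(\<Sum>X\<in>?P. cob c0 X) = (\<Sum>X\<in>?P. c' (X(v:=0)))"
      proof (rule sum.cong)
        fix X assume X: "X \<in> ?P"
        have finX: "finite (supp X)" using X insert(1) by simp
        have vX: "v \<in> supp X" using X by simp
        have "cob c0 X = c0 (X(v:=0)) + (\<Sum>i\<in>supp X - {v}. c0 (X(i:=0)))"
          using sum_del_split[OF finX vX] .
        moreover have "(\<Sum>i\<in>supp X - {v}. c0 (X(i:=0))) = 0"
          by (rule sum.neutral) (use X in \<open>auto simp: c0_def\<close>)
        ultimately show "cob c0 X = c' (X(v:=0))" unfolding c0_def by simp
      qed simp
      also have "\<dots> = (\<Sum>U\<in>?S. c' ((U(v:=1))(v:=0)))"
        by (rule reidx[symmetric]) (use insert in auto)
      also have "\<dots> = (\<Sum>U\<in>?S. c' U)"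
      proof (rule sum.cong)
        fix U assume "U \<in> ?S"
        then have "U v = 0" using sv_out insert(2) by auto
        then show "c' ((U(v:=1))(v:=0)) = c' U" by (simp add: fun_upd_idem)
      qed simp
      also have "\<dots> = 0"
      proof -
        have "V \<noteq> {}" using nV assms(2) by auto
        then obtain a where "a \<in> V" by auto
        then show ?thesis using pairing[OF c'(1) insert(1), of a V] by simp
      qed
      finally show ?thesis by simp
    qed
    obtain g where g: "\<forall>U. sv V U \<longrightarrow> card (supp U) = n \<longrightarrow> F U = cob g U"
      using SL[OF insert(1) True, of F] cocF topF by blast
    define c2 where "c2 X = (if X v = 0 then 0 else g ((scl (X v) X)(v:=0)))" for X
    have eq2: "equivariant c2" unfolding equivariant_def c2_def scl_def by (simp add: negv_def)
    define c where "c X = c0 X + c2 X" for X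
    have eqc: "equivariant c" using eq0 eq2 unfolding equivariant_def c_def by simp
    show ?thesis
    proof (intro exI[of _ c] conjI allI impI eqc)
      fix X assume X: "sv (insert v V) X" "card (supp X) = n+1"
      have finX: "finite (supp X)" using sv_finite_supp[OF fin X(1)] .
      have "E1 X = cob c2 X"
      proof (cases "X v = 0")
        case True
        have "sv V X" using X(1) True by (auto simp: sv_def supp_def)
        then have "E1 X = 0" using E1zero X(2) by simp
        moreover have "cob c2 X = 0" unfolding cob_def
          by (rule sum.neutral) (use True in \<open>auto simp: c2_def\<close>)
        ultimately show ?thesis by simp
      next
        case False
        define \<sigma> where "\<sigma> = X v"
        have sig: "\<sigma> = 1 \<or> \<sigma> = -1" using False sv_vals[OF X(1), of v] \<sigma>_def by auto
        define X' where "X' = scl \<sigma> X"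
        have X'X: "E1 X' = E1 X"
        proof (cases "\<sigma> = 1")
          case True
          then have "X' = X" unfolding X'_def scl_def by simp
          then show ?thesis by simp
        next
          case False
          then have "X' = negv X" using sig unfolding X'_def scl_def negv_def by auto
          then show ?thesis using eqE1 unfolding equivariant_def by simp
        qed
        have X'v: "X' v = 1" using sig unfolding X'_def scl_def \<sigma>_def by auto
        have suppX': "supp X' = supp X" using sig unfolding X'_def scl_def supp_def by auto
        have svX': "sv (insert v V) X'" using X(1) sig suppX' unfolding X'_def scl_def sv_def
          by auto
        define U where "U = X'(v:=0)"
        have svU: "sv V U" using sv_del[OF svX'] U_def by simp
        have vX: "v \<in> supp X" using False by (simp add: supp_def)
        have cU: "card (supp U) = n" using X(2) finX vX suppX' U_def by simp
        have "E1 X = F U" unfolding F_def U_def using X'X X'v by (simp add: fun_upd_idem)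
        also have "\<dots> = cob g U" using g svU cU by simp
        also have "\<dots> = cob c2 X"
        proof -
          have "cob c2 X = c2 (X(v:=0)) + (\<Sum>i\<in>supp X - {v}. c2 (X(i:=0)))"
            using sum_del_split[OF finX vX] .
          also have "c2 (X(v:=0)) = 0" unfolding c2_def by simp
          also have "(\<Sum>i\<in>supp X - {v}. c2 (X(i:=0))) = cob g U"
            unfolding cob_def U_def supp_upd0 suppX'
          proof (rule sum.cong)
            fix i assume i: "i \<in> supp X - {v}"
            then have "(scl ((X(i:=0)) v) (X(i:=0)))(v:=0) = (X'(v:=0))(i:=0)"
              unfolding X'_def scl_def \<sigma>_def by (auto simp: fun_eq_iff)
            then show "c2 (X(i:=0)) = g ((X'(v:=0))(i:=0))"
              unfolding c2_def using False i by auto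
          qed simp
          finally show ?thesis by simp
        qed
        finally show ?thesis .
      qed
      then have "E X = cob c0 X + cob c2 X" unfolding E1_def
        by (metis add.assoc bit_add_self add_0 add.commute)
      then show "E X = cob c X" unfolding c_def cob_add by simp
    qed
  qed
qed

lemma signvec_sv: "X \<in> signvec m \<longleftrightarrow> sv {1..m} X"
  unfolding signvec_def sv_def supp_def by auto

lemma even_card:
  assumes "finite P"
    and three: "\<And>a b c. a \<in> P \<Longrightarrow> b \<in> P \<Longrightarrow> c \<in> P \<Longrightarrow> a \<noteq> b \<Longrightarrow> b \<noteq> c \<Longrightarrow> a \<noteq> c \<Longrightarrow> False"
    and two: "\<And>a. a \<in> P \<Longrightarrow> \<exists>b\<in>P. b \<noteq> a"
  shows "card P = 0 \<or> card P = 2"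
proof (cases "P = {}")
  case False
  then obtain a where a: "a \<in> P" by auto
  then obtain b where b: "b \<in> P" "b \<noteq> a" using two by blast
  have "P = {a, b}" using a b three by blast
  then show ?thesis using b by simp
qed simp

lemma sum_indicator_bit: "finite S \<Longrightarrow> (\<Sum>i\<in>S. if p i then 1 else 0) = (of_nat (card {i\<in>S. p i}) :: bit)"
proof -
  assume "finite S"
  then have "(\<Sum>i\<in>S. if p i then 1 else 0) = (\<Sum>i\<in>S \<inter> {i. p i}. (1::bit))"
    by (simp add: sum.If_cases)
  also have "S \<inter> {i. p i} = {i\<in>S. p i}" by auto
  finally show ?thesis by simp
qed

lemma card02_bit: "card P = 0 \<or> card P = 2 \<Longrightarrow> (of_nat (card P) :: bit) = 0"
  by auto

lemma conf1:
  assumes "posp Z \<subseteq> posp U \<union> posp V" "negp Z \<subseteq> negp U \<union> negp V"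
    "Z k \<noteq> 0" "Z k \<in> {-1,0,1}" "V k = 0 \<or> V k = U k"
  shows "Z k = U k"
  using assms unfolding posp_def negp_def by auto

lemma conf2:
  assumes "posp Z \<subseteq> posp U \<union> posp V" "negp Z \<subseteq> negp U \<union> negp V"
    "Z k \<noteq> 0" "Z k \<in> {-1,0,1}" "U k = 0"
  shows "Z k = V k"
  using assms unfolding posp_def negp_def by auto

locale OMl =
  fixes m r :: nat and C :: "(nat \<Rightarrow> int) set"
  assumes rm: "r \<le> m" and om: "oriented_matroid_cocircuits m C" and un: "uniform_rank m r C"

context OMl
begin

lemma om1: "C \<subseteq> signvec m"
  using om unfolding oriented_matroid_cocircuits_def by (elim conjE) assumption
lemma om3: "\<forall>X\<in>C. negv X \<in> C"
  using om unfolding oriented_matroid_cocircuits_def by (elim conjE) assumption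
lemma om4: "\<forall>X\<in>C. \<forall>Y\<in>C. supp X \<subseteq> supp Y \<longrightarrow> X = Y \<or> X = negv Y"
  using om unfolding oriented_matroid_cocircuits_def by (elim conjE) assumption
lemma om5: "\<forall>X\<in>C. \<forall>Y\<in>C. \<forall>e. X \<noteq> negv Y \<and> e \<in> posp X \<inter> negp Y \<longrightarrow>
        (\<exists>Z\<in>C. posp Z \<subseteq> posp X \<union> posp Y \<and> negp Z \<subseteq> negp X \<union> negp Y \<and> e \<notin> supp Z)"
  using om unfolding oriented_matroid_cocircuits_def by (elim conjE) assumption

lemma C_sv: "X \<in> C \<Longrightarrow> sv {1..m} X"
  using om1 signvec_sv by blast

lemma C_vals: "X \<in> C \<Longrightarrow> X i \<in> {-1,0,1}"
  using C_sv sv_vals by blast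

lemma finite_C: "finite C"
proof -
  have "C \<subseteq> {X. sv {1..m} X}" using C_sv by auto
  then show ?thesis using finite_sv[of "{1..m}"] finite_subset by blast
qed

lemma negC: "X \<in> C \<Longrightarrow> negv X \<in> C"
  using om3 by blast

lemma sclC: assumes "X \<in> C" "s = 1 \<or> s = -1" shows "scl s X \<in> C"
proof -
  have 1: "scl 1 X = X" "scl (-1) X = negv X" by (auto simp: scl_def negv_def fun_eq_iff)
  show ?thesis
  proof (cases "s = 1")
    case True then show ?thesis using assms(1) 1 by simp
  next
    case False then have "s = -1" using assms(2) by simp
    then show ?thesis using negC[OF assms(1)] 1 by simp
  qed
qed

lemma uniqC: "X \<in> C \<Longrightarrow> Y \<in> C \<Longrightarrow> supp X = supp Y \<Longrightarrow> X = Y \<or> X = negv Y"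
  using om4 by blast

lemma existsC: "A \<subseteq> {1..m} \<Longrightarrow> card A = Suc (m - r) \<Longrightarrow> \<exists>Y\<in>C. supp Y = A"
proof -
  assume "A \<subseteq> {1..m}" "card A = Suc (m - r)"
  then have "A \<in> supp ` C" using un rm unfolding uniform_rank_def by simp
  then show ?thesis by auto
qed

lemma cardC: "Y \<in> C \<Longrightarrow> card (supp Y) = Suc (m - r)"
  using un rm unfolding uniform_rank_def by auto

lemma elimC:
  assumes "U \<in> C" "V \<in> C" "U \<noteq> negv V" "e \<in> posp U \<inter> negp V"
  shows "\<exists>Z\<in>C. posp Z \<subseteq> posp U \<union> posp V \<and> negp Z \<subseteq> negp U \<union> negp V \<and> e \<notin> supp Z"
  using om5 assms by blast

lemma elim_supp:
  assumes "U \<in> C" "V \<in> C" "U \<noteq> negv V" "e \<in> posp U \<inter> negp V"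
    "supp U \<union> supp V \<subseteq> S" "finite S" "card S = Suc (Suc (m - r))" "e \<in> S"
  shows "\<exists>Z\<in>C. posp Z \<subseteq> posp U \<union> posp V \<and> negp Z \<subseteq> negp U \<union> negp V \<and> supp Z = S - {e}"
proof -
  obtain Z where Z: "Z \<in> C" "posp Z \<subseteq> posp U \<union> posp V" "negp Z \<subseteq> negp U \<union> negp V" "e \<notin> supp Z"
    using elimC[OF assms(1-4)] by blast
  have "supp Z \<subseteq> supp U \<union> supp V"
  proof
    fix i assume i: "i \<in> supp Z"
    then have "Z i = 1 \<or> Z i = -1" using C_vals[OF Z(1), of i] by (auto simp: supp_def)
    then show "i \<in> supp U \<union> supp V" using Z(2,3) unfolding posp_def negp_def supp_def by auto
  qed
  then have sub: "supp Z \<subseteq> S - {e}" using assms(5) Z(4) by auto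
  have "card (supp Z) = card (S - {e})" using cardC[OF Z(1)] assms(6-8) by simp
  then have "supp Z = S - {e}" using sub assms(6) by (simp add: card_subset_eq)
  then show ?thesis using Z by blast
qed

end

lemma C_M_eq: "finite C \<Longrightarrow> C_M C Y = (if Y \<in> C then 1 else 0)"
  unfolding C_M_def hat_def by (simp add: sum.delta')

lemma pm1: "x \<in> {-1,0,1} \<Longrightarrow> x \<noteq> 0 \<Longrightarrow> x = 1 \<or> x = (-1::int)"
  by auto

lemma supp_scl: "s \<noteq> 0 \<Longrightarrow> supp (scl s Y) = supp Y"
  unfolding supp_def scl_def by simp

context OMl
begin

lemma par_a:
  assumes X: "sv {1..m} X" "card (supp X) = Suc (Suc (m-r))"
    and abc: "a \<in> supp X" "b \<in> supp X" "c \<in> supp X" "a \<noteq> b" "b \<noteq> c" "a \<noteq> c"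
    and inC: "X(a:=0) \<in> C" "X(b:=0) \<in> C" "X(c:=0) \<in> C"
  shows False
proof -
  let ?S = "supp X"
  have finS: "finite ?S" using sv_finite_supp[OF _ X(1)] by simp
  have vals: "X k = 1 \<or> X k = -1" if "k \<in> ?S" for k
    using pm1[OF sv_vals[OF X(1)]] that by (auto simp: supp_def)
  define x where "x = X c"
  have x: "x = 1 \<or> x = -1" using vals[OF abc(3)] x_def by simp
  have mx: "-x = 1 \<or> -x = -1" using x by auto
  define U where "U = scl x (X(a:=0))"
  define V where "V = scl (-x) (X(b:=0))"
  have UC: "U \<in> C" unfolding U_def using sclC[OF inC(1) x] .
  have VC: "V \<in> C" unfolding V_def using sclC[OF inC(2) mx] .
  have Ua: "U a = 0" unfolding U_def scl_def by simp
  have Va: "V a = - x * X a" unfolding V_def scl_def using abc by simp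
  have Ub: "U b = x * X b" unfolding U_def scl_def using abc by simp
  have Vb: "V b = 0" unfolding V_def scl_def by simp
  have "negv V a \<noteq> 0" using Va x vals[OF abc(1)] by (auto simp: negv_def)
  then have UV: "U \<noteq> negv V" using Ua by auto
  have Uc: "U c = 1" unfolding U_def scl_def x_def using abc vals[OF abc(3)] by auto
  have Vc: "V c = -1" unfolding V_def scl_def x_def using abc vals[OF abc(3)] by auto
  have e: "c \<in> posp U \<inter> negp V" using Uc Vc by (simp add: posp_def negp_def)
  have sUV: "supp U \<union> supp V \<subseteq> ?S" unfolding U_def V_def scl_def supp_def by auto
  obtain Z where Z: "Z \<in> C" "posp Z \<subseteq> posp U \<union> posp V" "negp Z \<subseteq> negp U \<union> negp V"
    "supp Z = ?S - {c}"
    using elim_supp[OF UC VC UV e sUV finS X(2) abc(3)] by blast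
  have "supp (X(c:=0)) = ?S - {c}" by simp
  then have ZX: "Z = X(c:=0) \<or> Z = negv (X(c:=0))" using uniqC[OF Z(1) inC(3)] Z(4) by simp
  have Zb: "Z b = U b"
    by (rule conf1[OF Z(2,3)]) (use Z(4) abc C_vals[OF Z(1)] Vb in \<open>auto simp: supp_def\<close>)
  have Za: "Z a = V a"
    by (rule conf2[OF Z(2,3)]) (use Z(4) abc C_vals[OF Z(1)] Ua in \<open>auto simp: supp_def\<close>)
  show False
    using ZX
  proof
    assume "Z = X(c:=0)"
    then have "X b = x * X b" "X a = - x * X a" using Zb Za Ub Va abc by auto
    then show False using x vals[OF abc(1)] vals[OF abc(2)] by auto
  next
    assume "Z = negv (X(c:=0))"
    then have "- X b = x * X b" "- X a = - x * X a" using Zb Za Ub Va abc by (auto simp: negv_def)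
    then show False using x vals[OF abc(1)] vals[OF abc(2)] by auto
  qed
qed

lemma par_b:
  assumes X: "sv {1..m} X" "card (supp X) = Suc (Suc (m-r))"
    and a: "a \<in> supp X" "X(a:=0) \<in> C"
  shows "\<exists>b\<in>supp X. b \<noteq> a \<and> X(b:=0) \<in> C"
proof (rule ccontr)
  assume nb: "\<not> (\<exists>b\<in>supp X. b \<noteq> a \<and> X(b:=0) \<in> C)"
  let ?S = "supp X"
  have finS: "finite ?S" using sv_finite_supp[OF _ X(1)] by simp
  have vals: "X k = 1 \<or> X k = -1" if "k \<in> ?S" for k
    using pm1[OF sv_vals[OF X(1)]] that by (auto simp: supp_def)
  have Sm: "?S \<subseteq> {1..m}" using X(1) by (simp add: sv_def)
  define W where "W i = (SOME W. W \<in> C \<and> supp W = ?S - {i} \<and> W a = X a)" for i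
  have Wp: "W i \<in> C \<and> supp (W i) = ?S - {i} \<and> W i a = X a" if i: "i \<in> ?S - {a}" for i
  proof -
    have "?S - {i} \<subseteq> {1..m}" using Sm by auto
    moreover have "card (?S - {i}) = Suc (m - r)" using X(2) finS i by simp
    ultimately obtain Y where Y: "Y \<in> C" "supp Y = ?S - {i}" using existsC by blast
    have "a \<in> supp Y" using Y i a by auto
    then have Ya: "Y a = 1 \<or> Y a = -1" using pm1[OF C_vals[OF Y(1)]] by (auto simp: supp_def)
    define s where "s = Y a * X a"
    have s: "s = 1 \<or> s = -1" using Ya vals[OF a(1)] s_def by auto
    have "scl s Y \<in> C" using sclC[OF Y(1) s] .
    moreover have "s \<noteq> 0" using s by auto
    then have "supp (scl s Y) = ?S - {i}" using Y(2) supp_scl[of s Y] by simp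
    moreover have "scl s Y a = X a" using Ya vals[OF a(1)] by (auto simp: scl_def s_def)
    ultimately have "\<exists>W. W \<in> C \<and> supp W = ?S - {i} \<and> W a = X a" by blast
    then show ?thesis unfolding W_def by (rule someI_ex)
  qed
  define N where "N i = {k \<in> ?S - {i}. W i k \<noteq> X k}" for i
  have finN: "finite (N i)" for i using finS unfolding N_def by auto
  have "\<exists>j. j \<in> ?S - {a}"
  proof -
    have "card (?S - {a}) = Suc (m - r)" using X(2) finS a by simp
    then show ?thesis by (metis all_not_in_conv card.empty nat.simps(3))
  qed
  then obtain i where i: "i \<in> ?S - {a}" and imin: "\<And>j. j \<in> ?S - {a} \<Longrightarrow> card (N i) \<le> card (N j)"
    using ex_has_least_nat[of "\<lambda>j. j \<in> ?S - {a}" _ "\<lambda>j. card (N j)"] by blast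
  note Wi = Wp[OF i]
  show False
  proof (cases "N i = {}")
    case True
    have "W i = X(i:=0)"
    proof
      fix k
      show "W i k = (X(i:=0)) k"
      proof (cases "k \<in> ?S - {i}")
        case True
        then show ?thesis using \<open>N i = {}\<close> unfolding N_def by auto
      next
        case False
        then have "k \<notin> supp (W i)" using Wi by simp
        then have "W i k = 0" by (simp add: supp_def)
        moreover have "(X(i:=0)) k = 0" using False by (auto simp: supp_def)
        ultimately show ?thesis by simp
      qed
    qed
    then have "X(i:=0) \<in> C" using Wi by simp
    then show False using nb i by blast
  next
    case False
    then obtain e where e: "e \<in> N i" by auto
    have eS: "e \<in> ?S" "e \<noteq> i" "W i e \<noteq> X e" using e unfolding N_def by auto
    have ea: "e \<noteq> a" using eS(3) Wi by auto
    have Wie: "W i e = 1 \<or> W i e = -1"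
      using pm1[OF C_vals[OF conjunct1[OF Wi]]] eS Wi by (auto simp: supp_def)
    define x where "x = X e"
    have x: "x = 1 \<or> x = -1" using vals[OF eS(1)] x_def by simp
    define U where "U = scl x (X(a:=0))"
    define V where "V = scl x (W i)"
    have UC: "U \<in> C" unfolding U_def using sclC[OF a(2) x] .
    have VC: "V \<in> C" unfolding V_def using sclC[OF conjunct1[OF Wi] x] .
    have Ua: "U a = 0" unfolding U_def scl_def by simp
    have Va: "V a = x * X a" unfolding V_def scl_def using Wi by simp
    have "negv V a \<noteq> 0" using Va x vals[OF a(1)] by (auto simp: negv_def)
    then have UV: "U \<noteq> negv V" using Ua by auto
    have Ue: "U e = 1" unfolding U_def scl_def x_def using ea vals[OF eS(1)] by auto
    have Ve: "V e = -1" unfolding V_def scl_def x_def using eS(3) Wie vals[OF eS(1)] by auto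
    have ee: "e \<in> posp U \<inter> negp V" using Ue Ve by (simp add: posp_def negp_def)
    have sUV: "supp U \<union> supp V \<subseteq> ?S" using Wi unfolding U_def V_def scl_def supp_def by auto
    obtain Z where Z: "Z \<in> C" "posp Z \<subseteq> posp U \<union> posp V" "negp Z \<subseteq> negp U \<union> negp V"
      "supp Z = ?S - {e}"
      using elim_supp[OF UC VC UV ee sUV finS X(2) eS(1)] by blast
    define Z' where "Z' = scl x Z"
    have Z'C: "Z' \<in> C" unfolding Z'_def using sclC[OF Z(1) x] .
    have "x \<noteq> 0" using x by auto
    then have suppZ': "supp Z' = ?S - {e}" using Z(4) supp_scl[of x Z] unfolding Z'_def by simp
    have Za: "Z a = V a"
      by (rule conf2[OF Z(2,3)]) (use Z(4) a ea C_vals[OF Z(1)] Ua in \<open>auto simp: supp_def\<close>)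
    have Z'a: "Z' a = X a" unfolding Z'_def scl_def using Za Va x by auto
    have ei: "e \<in> ?S - {a}" using eS ea by simp
    note We = Wp[OF ei]
    have "W e = Z' \<or> W e = negv Z'" using uniqC[OF conjunct1[OF We] Z'C] We suppZ' by simp
    moreover have "W e \<noteq> negv Z'"
    proof
      assume "W e = negv Z'"
      then have "W e a = - X a" using Z'a by (simp add: negv_def)
      then show False using We vals[OF a(1)] by auto
    qed
    ultimately have WeZ: "W e = Z'" by simp
    have "N e \<subseteq> N i - {e}"
    proof
      fix k assume k: "k \<in> N e"
      then have kS: "k \<in> ?S" "k \<noteq> e" "Z' k \<noteq> X k" unfolding N_def using WeZ by auto
      have ka: "k \<noteq> a" using kS(3) Z'a by auto
      have Zi: "Z i = U i"
        by (rule conf1[OF Z(2,3)])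
           (use Z(4) i eS C_vals[OF Z(1)] Wi in \<open>auto simp: supp_def V_def scl_def\<close>)
      have Z'i: "Z' i = X i" unfolding Z'_def scl_def using Zi i x unfolding U_def scl_def by auto
      have ki: "k \<noteq> i" using kS(3) Z'i by auto
      have "W i k \<noteq> X k"
      proof
        assume Wik: "W i k = X k"
        have "Z k = U k"
          by (rule conf1[OF Z(2,3)])
             (use Z(4) kS C_vals[OF Z(1)] Wik ka in \<open>auto simp: supp_def U_def V_def scl_def\<close>)
        then have "Z' k = X k" unfolding Z'_def scl_def U_def using ka x by auto
        then show False using kS(3) by simp
      qed
      then show "k \<in> N i - {e}" unfolding N_def using kS ki by auto
    qed
    then have "card (N e) \<le> card (N i - {e})" using finN by (simp add: card_mono)
    also have "\<dots> < card (N i)" using e finN[of i] by (meson card_Diff1_less)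
    finally show False using imin[OF ei] by simp
  qed
qed

lemma OMpar:
  assumes X: "sv {1..m} X" "card (supp X) = Suc (Suc (m-r))"
  shows "cob (C_M C) X = 0"
proof -
  let ?S = "supp X"
  have finS: "finite ?S" using sv_finite_supp[OF _ X(1)] by simp
  have "cob (C_M C) X = (\<Sum>i\<in>?S. if X(i:=0) \<in> C then 1 else 0)"
    unfolding cob_def using C_M_eq[OF finite_C] by simp
  also have "\<dots> = of_nat (card {i\<in>?S. X(i:=0) \<in> C})" by (rule sum_indicator_bit[OF finS])
  also have "\<dots> = 0"
  proof (rule card02_bit, rule even_card)
    show "finite {i\<in>?S. X(i:=0) \<in> C}" using finS by simp
  next
    fix a b c assume "a \<in> {i\<in>?S. X(i:=0) \<in> C}" "b \<in> {i\<in>?S. X(i:=0) \<in> C}"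
      "c \<in> {i\<in>?S. X(i:=0) \<in> C}" "a \<noteq> b" "b \<noteq> c" "a \<noteq> c"
    then show False using par_a[OF X, of a b c] by auto
  next
    fix a assume "a \<in> {i\<in>?S. X(i:=0) \<in> C}"
    then show "\<exists>b\<in>{i\<in>?S. X(i:=0) \<in> C}. b \<noteq> a" using par_b[OF X, of a] by auto
  qed
  finally show ?thesis .
qed

end

definition pos :: "nat set \<Rightarrow> nat \<Rightarrow> nat" where
  "pos A i = card {a\<in>A. a < i}"

definition altp :: "nat set \<Rightarrow> (nat \<Rightarrow> int) \<Rightarrow> bool" where
  "altp A X \<longleftrightarrow> (\<exists>\<sigma>. (\<sigma> = 1 \<or> \<sigma> = -1) \<and> (\<forall>i\<in>A. X i = \<sigma> * (-1)^(pos A i)))"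

lemma altp_cong: "(\<And>i. i \<in> A \<Longrightarrow> X i = Y i) \<Longrightarrow> altp A X = altp A Y"
  unfolding altp_def by auto

lemma pos_nth:
  assumes "sorted_wrt (<) l" "j < length l"
  shows "pos (set l) (l!j) = j"
proof -
  have lt: "l!i < l!j \<longleftrightarrow> i < j" if "i < length l" for i
  proof
    assume "i < j" then show "l!i < l!j" using assms that sorted_wrt_nth_less by blast
  next
    assume "l!i < l!j"
    show "i < j"
    proof (rule ccontr)
      assume "\<not> i < j"
      then have "j < i \<or> j = i" by auto
      then show False using \<open>l!i < l!j\<close> assms that sorted_wrt_nth_less[of "(<)" l j i] by auto
    qed
  qed
  have "{a\<in>set l. a < l!j} = (\<lambda>i. l!i) ` {..<j}"
  proof
    show "{a\<in>set l. a < l!j} \<subseteq> (\<lambda>i. l!i) ` {..<j}"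
    proof
      fix a assume "a \<in> {a\<in>set l. a < l!j}"
      then obtain i where "i < length l" "a = l!i" "l!i < l!j" by (auto simp: in_set_conv_nth)
      then show "a \<in> (\<lambda>i. l!i) ` {..<j}" using lt by auto
    qed
    show "(\<lambda>i. l!i) ` {..<j} \<subseteq> {a\<in>set l. a < l!j}"
      using lt assms(2) by auto
  qed
  moreover have "inj_on (\<lambda>i. l!i) {..<j}"
  proof -
    have "distinct l" using assms(1) strict_sorted_iff by blast
    then show ?thesis using assms(2) by (auto simp: inj_on_def nth_eq_iff_index_eq)
  qed
  ultimately show ?thesis unfolding pos_def by (simp add: card_image)
qed

lemma supp_restr: "supp (restr X B) = supp X \<inter> B"
  unfolding supp_def restr_def by auto

lemma w1_pow_char:
  "(\<forall>i. X i \<in> {-1,0,1}) \<Longrightarrow> finite (supp X) \<Longrightarrow> card (supp X) = Suc k \<Longrightarrow>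
    w1_pow k X = (if altp (supp X) X then 1 else 0)"
proof (induction k arbitrary: X)
  case 0
  then obtain a where A: "supp X = {a}" by (auto simp: card_Suc_eq)
  have "X a = 1 \<or> X a = -1" using 0 A by (auto simp: supp_def)
  moreover have "pos {a} a = 0" unfolding pos_def by simp
  ultimately have "altp (supp X) X" unfolding altp_def A by (intro exI[of _ "X a"]) auto
  then show ?case by simp
next
  case (Suc k)
  let ?A = "supp X"
  define l where "l = sorted_list_of_set ?A"
  have sl: "sorted_wrt (<) l" unfolding l_def by simp
  have setl: "set l = ?A" unfolding l_def using Suc.prems by simp
  have len: "length l = Suc (Suc k)" unfolding l_def using Suc.prems by simp
  have dl: "distinct l" using sl strict_sorted_iff by blast
  have vals: "X i = 1 \<or> X i = -1" if "i \<in> ?A" for i using Suc.prems(1) that by (auto simp: supp_def)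
  define q where "q = l ! Suc k"
  define p where "p = l ! k"
  have take: "take (Suc k) l = butlast l" using len by (simp add: butlast_conv_take)
  have drop: "drop k l = [p, q]"
  proof -
    have "drop (Suc (Suc k)) l = []" using len by simp
    then have "drop (Suc k) l = [q]" using Cons_nth_drop_Suc[of "Suc k" l] len q_def by simp
    then show ?thesis using Cons_nth_drop_Suc[of k l] len p_def by simp
  qed
  have lq: "l = butlast l @ [q]"
  proof -
    have "l \<noteq> []" using len by auto
    then have "l = butlast l @ [last l]" by simp
    moreover have "last l = q" using \<open>l \<noteq> []\<close> len q_def by (simp add: last_conv_nth)
    ultimately show ?thesis by simp
  qed
  define B where "B = set (butlast l)"
  have "set l = set (butlast l) \<union> {q}" using lq by (metis set_append list.set(1) list.set(2))
  then have AB1: "?A = insert q B" using setl unfolding B_def by auto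
  have "distinct (butlast l @ [q])" using dl lq by simp
  then have AB2: "q \<notin> B" unfolding B_def by simp
  note AB = AB1 AB2
  have "sorted_wrt (<) (butlast l @ [q])" using sl lq by simp
  then have slB: "sorted_wrt (<) (butlast l)" by (simp add: sorted_wrt_append)
  have lenB: "length (butlast l) = Suc k" using len by simp
  have dB: "distinct (butlast l)" using \<open>distinct (butlast l @ [q])\<close> by simp
  have cardB: "card B = Suc k" using dB lenB unfolding B_def by (simp add: distinct_card)
  have pnth: "p = butlast l ! k"
    unfolding p_def using len by (simp add: nth_butlast)
  have pB: "p \<in> B" unfolding B_def pnth using lenB by simp
  have posB_p: "pos B p = k" using pos_nth[OF slB, of k] lenB pnth B_def by simp
  have posA_q: "pos ?A q = Suc k" using pos_nth[OF sl, of "Suc k"] len q_def setl by simp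
  have Bq: "i < q" if "i \<in> B" for i
  proof -
    from that obtain j where "j < Suc k" "i = l ! j" unfolding B_def using lenB
      by (auto simp: in_set_conv_nth nth_butlast)
    then show ?thesis using sorted_wrt_nth_less[OF sl, of j "Suc k"] len q_def by simp
  qed
  have posAB: "pos ?A i = pos B i" if "i \<in> B" for i
  proof -
    have "i < q" using Bq that by simp
    then have "{a\<in>?A. a < i} = {a\<in>B. a < i}" using AB by auto
    then show ?thesis unfolding pos_def by simp
  qed
  have pq: "p \<noteq> q" using pB AB by auto
  define Y where "Y = restr X B"
  have Y1: "\<forall>i. Y i \<in> {-1,0,1}" using Suc.prems(1) unfolding Y_def restr_def by auto
  have suppY: "supp Y = B" unfolding Y_def supp_restr using AB by auto
  have IH: "w1_pow k Y = (if altp B Y then 1 else 0)"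
    using Suc.IH[OF Y1] suppY cardB by (simp add: B_def)
  have altYX: "altp B Y = altp B X" by (rule altp_cong) (simp add: Y_def restr_def)
  define Z where "Z = restr X {p, q}"
  have suppZ: "supp Z = {p, q}" unfolding Z_def supp_restr using AB pB by auto
  have w1Z: "w1 Z = (if X p \<noteq> X q then 1 else 0)"
  proof -
    have "card (supp Z) = 2" using suppZ pq by simp
    moreover have "(\<exists>i j. Z i = 1 \<and> Z j = -1) \<longleftrightarrow> X p \<noteq> X q"
    proof
      assume "\<exists>i j. Z i = 1 \<and> Z j = -1"
      then obtain i j where "Z i = 1" "Z j = -1" by blast
      then have "i \<in> {p,q}" "j \<in> {p,q}" "X i = 1" "X j = -1" unfolding Z_def restr_def
        by (auto split: if_splits)
      then show "X p \<noteq> X q" by auto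
    next
      assume "X p \<noteq> X q"
      moreover have "p \<in> ?A" "q \<in> ?A" using AB pB by auto
      ultimately have "(X p = 1 \<and> X q = -1) \<or> (X p = -1 \<and> X q = 1)"
        using vals[of p] vals[of q] by auto
      then show "\<exists>i j. Z i = 1 \<and> Z j = -1" unfolding Z_def restr_def by auto
    qed
    ultimately show ?thesis unfolding w1_def by simp
  qed
  have key: "altp ?A X \<longleftrightarrow> altp B X \<and> X p \<noteq> X q"
  proof
    assume "altp ?A X"
    then obtain \<sigma> where s: "\<sigma> = 1 \<or> \<sigma> = -1" "\<forall>i\<in>?A. X i = \<sigma> * (-1)^(pos ?A i)"
      unfolding altp_def by blast
    have "altp B X" unfolding altp_def using s posAB AB by (intro exI[of _ \<sigma>]) auto
    moreover have "X p = \<sigma> * (-1)^k" using s(2) AB pB posAB posB_p by auto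
    moreover have "X q = \<sigma> * (-1)^Suc k" using s(2) AB posA_q by auto
    ultimately show "altp B X \<and> X p \<noteq> X q" using s(1) by auto
  next
    assume h: "altp B X \<and> X p \<noteq> X q"
    then obtain \<sigma> where s: "\<sigma> = 1 \<or> \<sigma> = -1" "\<forall>i\<in>B. X i = \<sigma> * (-1)^(pos B i)"
      unfolding altp_def by blast
    have Xp: "X p = \<sigma> * (-1)^k" using s(2) pB posB_p by auto
    have "X q = 1 \<or> X q = -1" using vals AB by auto
    then have Xq: "X q = \<sigma> * (-1)^(pos ?A q)" using h Xp s(1) posA_q
      by (cases "even k") auto
    show "altp ?A X" unfolding altp_def
      using s posAB Xq AB by (intro exI[of _ \<sigma>]) auto
  qed
  have "w1_pow (Suc k) X = w1_pow k Y * w1 Z"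
    unfolding Y_def Z_def B_def by (simp add: cup_def Let_def l_def[symmetric] take drop)
  also have "\<dots> = (if altp ?A X then 1 else 0)"
    unfolding IH w1Z altYX key by simp
  finally show ?case .
qed

lemma restr_negv: "restr (negv X) B = negv (restr X B)"
  unfolding restr_def negv_def by auto

lemma w1_equiv: "w1 (negv X) = w1 X"
  unfolding w1_def negv_def supp_def by auto

lemma w1_pow_equiv: "equivariant (w1_pow k)"
proof (induction k)
  case 0 then show ?case by (simp add: equivariant_def)
next
  case (Suc k)
  then show ?case unfolding equivariant_def
    by (simp add: cup_def Let_def restr_negv w1_equiv)
qed

definition stp :: "nat set \<Rightarrow> (nat \<Rightarrow> int) \<Rightarrow> nat \<Rightarrow> bool" where
  "stp S z p \<longleftrightarrow> (\<exists>\<sigma>. (\<sigma> = 1 \<or> \<sigma> = -1) \<and> (\<forall>i\<in>S-{p}. z i = (if p < i then -\<sigma> else \<sigma>)))"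

lemma three_order:
  fixes a b c :: nat
  assumes "\<And>x y w. x < y \<Longrightarrow> y < w \<Longrightarrow> P x \<Longrightarrow> P y \<Longrightarrow> P w \<Longrightarrow> False"
    "a \<noteq> b" "b \<noteq> c" "a \<noteq> c" "P a" "P b" "P c"
  shows False
proof (cases "a < b")
  case True
  then show ?thesis
  proof (cases "b < c")
    case True then show ?thesis using assms \<open>a < b\<close> by blast
  next
    case False
    then have "c < b" using assms by auto
    then show ?thesis
      using assms \<open>a < b\<close> by (cases "a < c") (blast, metis linorder_neqE_nat)
  qed
next
  case False
  then have "b < a" using assms by auto
  then show ?thesis
  proof (cases "a < c")
    case True then show ?thesis using assms \<open>b < a\<close> by blast
  next
    case False
    then have "c < a" using assms by auto
    then show ?thesis
      using assms \<open>b < a\<close> by (cases "b < c") (blast, metis linorder_neqE_nat)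
  qed
qed

lemma stp_three:
  assumes "x < y" "y < w" "x \<in> S" "y \<in> S" "w \<in> S" "stp S z x" "stp S z y" "stp S z w"
  shows False
proof -
  obtain s1 where s1: "s1 = 1 \<or> s1 = -1" "\<forall>i\<in>S-{x}. z i = (if x < i then -s1 else s1)"
    using assms(6) unfolding stp_def by blast
  obtain s2 where s2: "s2 = 1 \<or> s2 = -1" "\<forall>i\<in>S-{y}. z i = (if y < i then -s2 else s2)"
    using assms(7) unfolding stp_def by blast
  obtain s3 where s3: "s3 = 1 \<or> s3 = -1" "\<forall>i\<in>S-{w}. z i = (if w < i then -s3 else s3)"
    using assms(8) unfolding stp_def by blast
  have xy: "x \<noteq> y" "y \<noteq> w" "x \<noteq> w" "\<not> w < x" "\<not> w < y" "\<not> y < x"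
    using assms(1,2) by auto
  have m: "y \<in> S - {w}" "x \<in> S - {w}" "y \<in> S - {x}" "w \<in> S - {x}" "x \<in> S - {y}" "w \<in> S - {y}"
    using assms(3-5) xy by auto
  note e = bspec[OF s3(2) m(1)] bspec[OF s3(2) m(2)] bspec[OF s1(2) m(3)] bspec[OF s1(2) m(4)]
    bspec[OF s2(2) m(5)] bspec[OF s2(2) m(6)]
  from e have 1: "z y = s3" and 2: "z y = - s1" and 3: "z w = - s1" and 4: "z x = s2"
    and 5: "z w = - s2" and 6: "z x = s3"
    using xy assms(1,2) by auto
  have "s2 = - s2" using 1 2 3 4 5 6 by simp
  then show False using s2(1) by auto
qed

lemma stp_two:
  assumes fin: "finite S" and c2: "2 \<le> card S" and zv: "\<forall>i\<in>S. z i = 1 \<or> z i = -1"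
    and p: "p \<in> S" "stp S z p"
  shows "\<exists>p'\<in>S. p' \<noteq> p \<and> stp S z p'"
proof -
  obtain s where s: "s = 1 \<or> s = -1" "\<forall>i\<in>S-{p}. z i = (if p < i then -s else s)"
    using p(2) unfolding stp_def by blast
  have other: "\<exists>j\<in>S. j \<noteq> p"
  proof (rule ccontr)
    assume "\<not> (\<exists>j\<in>S. j \<noteq> p)"
    then have "S = {p}" using p(1) by blast
    then show False using c2 by simp
  qed
  show ?thesis
  proof (cases "z p = s")
    case zp: True
    show ?thesis
    proof (cases "\<exists>i\<in>S. p < i")
      case True
      define p' where "p' = Min {i\<in>S. p < i}"
      have fin': "finite {i\<in>S. p < i}" using fin by simp
      have p'in: "p' \<in> S" "p < p'" using Min_in[OF fin'] True unfolding p'_def by auto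
      have p'min: "\<And>i. i \<in> S \<Longrightarrow> p < i \<Longrightarrow> p' \<le> i" unfolding p'_def using fin' by simp
      have "stp S z p'" unfolding stp_def
      proof (intro exI[of _ s] conjI s(1) ballI)
        fix i assume i: "i \<in> S - {p'}"
        show "z i = (if p' < i then -s else s)"
        proof (cases "p' < i")
          case True then show ?thesis using s(2) i p'in by auto
        next
          case False
          then have "i < p'" using i by auto
          then have "i \<le> p" using p'min i by force
          then show ?thesis using s(2) i zp False by (cases "i = p") auto
        qed
      qed
      then show ?thesis using p'in by auto
    next
      case False
      define p' where "p' = Min S"
      have p'in: "p' \<in> S" using Min_in fin p unfolding p'_def by auto
      have p'min: "\<And>i. i \<in> S \<Longrightarrow> p' \<le> i" unfolding p'_def using fin by simp
      have p'p: "p' \<noteq> p"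
      proof
        assume "p' = p"
        then have "\<forall>j\<in>S. j = p" using False p'min by force
        then show False using other by auto
      qed
      have "stp S z p'" unfolding stp_def
      proof (intro exI[of _ "-s"] conjI ballI)
        show "- s = 1 \<or> - s = -1" using s(1) by auto
        fix i assume i: "i \<in> S - {p'}"
        then have "p' < i" using p'min by force
        moreover have "i \<le> p" using False i by force
        ultimately show "z i = (if p' < i then - (- s) else - s)"
          using s(2) i zp by (cases "i = p") auto
      qed
      then show ?thesis using p'in p'p by auto
    qed
  next
    case zp: False
    have zps: "z p = - s" using zp zv p s(1) by auto
    show ?thesis
    proof (cases "\<exists>i\<in>S. i < p")
      case True
      define p' where "p' = Max {i\<in>S. i < p}"
      have fin': "finite {i\<in>S. i < p}" using fin by simp
      have "{i\<in>S. i < p} \<noteq> {}" using True by blast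
      then have "p' \<in> {i\<in>S. i < p}" using Max_in[OF fin'] unfolding p'_def by blast
      then have p'in: "p' \<in> S" "p' < p" by auto
      have p'max: "\<And>i. i \<in> S \<Longrightarrow> i < p \<Longrightarrow> i \<le> p'" unfolding p'_def using fin' by simp
      have "stp S z p'" unfolding stp_def
      proof (intro exI[of _ s] conjI s(1) ballI)
        fix i assume i: "i \<in> S - {p'}"
        show "z i = (if p' < i then -s else s)"
        proof (cases "p' < i")
          case True
          then have "p \<le> i" using p'max i by force
          then show ?thesis using s(2) i zps True by (cases "i = p") auto
        next
          case False
          then have "i < p'" using i by auto
          then show ?thesis using s(2) i p'in False by auto
        qed
      qed
      then show ?thesis using p'in by auto
    next
      case False
      define p' where "p' = Max S"
      have p'in: "p' \<in> S" using Max_in fin p unfolding p'_def by auto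
      have p'max: "\<And>i. i \<in> S \<Longrightarrow> i \<le> p'" unfolding p'_def using fin by simp
      have p'p: "p' \<noteq> p"
      proof
        assume "p' = p"
        then have "\<forall>j\<in>S. j = p" using False p'max by force
        then show False using other by auto
      qed
      have "stp S z p'" unfolding stp_def
      proof (intro exI[of _ "-s"] conjI ballI)
        show "- s = 1 \<or> - s = -1" using s(1) by auto
        fix i assume i: "i \<in> S - {p'}"
        then have "i < p'" using p'max by force
        moreover have "p \<le> i" using False i by force
        ultimately show "z i = (if p' < i then - (- s) else - s)"
          using s(2) i zps by (cases "i = p") auto
      qed
      then show ?thesis using p'in p'p by auto
    qed
  qed
qed

lemma stp_card:
  assumes fin: "finite S" and c2: "2 \<le> card S" and zv: "\<forall>i\<in>S. z i = 1 \<or> z i = -1"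
  shows "card {p\<in>S. stp S z p} = 0 \<or> card {p\<in>S. stp S z p} = 2"
proof (rule even_card)
  show "finite {p\<in>S. stp S z p}" using fin by simp
next
  fix a b c assume "a \<in> {p\<in>S. stp S z p}" "b \<in> {p\<in>S. stp S z p}" "c \<in> {p\<in>S. stp S z p}"
    "a \<noteq> b" "b \<noteq> c" "a \<noteq> c"
  then show False
    using three_order[of "\<lambda>x. x \<in> S \<and> stp S z x" a b c] stp_three[of _ _ _ S z] by blast
next
  fix a assume "a \<in> {p\<in>S. stp S z p}"
  then show "\<exists>b\<in>{p\<in>S. stp S z p}. b \<noteq> a" using stp_two[OF fin c2 zv, of a] by auto
qed

lemma pos_del:
  assumes "finite S" "p \<in> S" "i \<in> S" "i \<noteq> p"
  shows "pos S i = (if p < i then Suc (pos (S - {p}) i) else pos (S - {p}) i)"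
proof -
  have e: "{a\<in>S-{p}. a < i} = {a\<in>S. a < i} - {p}" by auto
  have f: "finite {a\<in>S. a < i}" using assms(1) by simp
  show ?thesis
  proof (cases "p < i")
    case True
    then have "p \<in> {a\<in>S. a < i}" using assms by simp
    then have "card {a\<in>S. a < i} = Suc (card ({a\<in>S. a < i} - {p}))"
      using f by (metis card_Suc_Diff1)
    then show ?thesis unfolding pos_def e using True by simp
  next
    case False
    then have "{a\<in>S. a < i} - {p} = {a\<in>S. a < i}" by auto
    then show ?thesis unfolding pos_def e using False by simp
  qed
qed

lemma pm_aux: "t = 1 \<or> t = -1 \<Longrightarrow> ((Y::int) = \<sigma> * t \<longleftrightarrow> Y * t = \<sigma>)"
  by auto

lemma neg1_pow: "(-1::int)^k = 1 \<or> (-1::int)^k = -1"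
  by (cases "even k") auto

lemma alt_stp:
  assumes fin: "finite S" and p: "p \<in> S"
  shows "altp (S - {p}) Y \<longleftrightarrow> stp S (\<lambda>i. Y i * (-1)^pos S i) p"
proof -
  have per: "(Y i = \<sigma> * (-1)^pos (S-{p}) i) \<longleftrightarrow> (Y i * (-1)^pos S i = (if p < i then -\<sigma> else \<sigma>))"
    if i: "i \<in> S - {p}" for i \<sigma>
  proof -
    define t where "t = (-1::int)^pos (S-{p}) i"
    have t: "t = 1 \<or> t = -1" unfolding t_def by (rule neg1_pow)
    have "(-1::int)^pos S i = (if p < i then -t else t)"
      using pos_del[OF fin p, of i] i unfolding t_def by auto
    then show ?thesis using pm_aux[OF t, of "Y i" \<sigma>] t unfolding t_def[symmetric] by auto
  qed
  show ?thesis unfolding altp_def stp_def using per by blast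
qed

lemma w1_pow_cocycle:
  assumes vals: "\<forall>i. X i \<in> {-1,0,1}" and fin: "finite (supp X)" and c: "card (supp X) = Suc (Suc n)"
  shows "cob (w1_pow n) X = 0"
proof -
  let ?S = "supp X"
  define z where "z i = X i * (-1)^pos ?S i" for i
  have "cob (w1_pow n) X = (\<Sum>p\<in>?S. if stp ?S z p then 1 else 0)"
    unfolding cob_def
  proof (rule sum.cong)
    fix p assume p: "p \<in> ?S"
    have v: "\<forall>i. (X(p:=0)) i \<in> {-1,0,1}" using vals by auto
    have f: "finite (supp (X(p:=0)))" using fin by simp
    have cc: "card (supp (X(p:=0))) = Suc n" using fin c p by simp
    have "w1_pow n (X(p:=0)) = (if altp (?S - {p}) (X(p:=0)) then 1 else 0)"
      using w1_pow_char[OF v f cc] by (simp only: supp_upd0)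
    also have "altp (?S - {p}) (X(p:=0)) = altp (?S - {p}) X" by (rule altp_cong) simp
    also have "\<dots> = stp ?S z p" unfolding z_def by (rule alt_stp[OF fin p])
    finally show "w1_pow n (X(p:=0)) = (if stp ?S z p then 1 else 0)" .
  qed simp
  also have "\<dots> = of_nat (card {p\<in>?S. stp ?S z p})" by (rule sum_indicator_bit[OF fin])
  also have "\<dots> = 0"
  proof (rule card02_bit, rule stp_card[OF fin])
    show "2 \<le> card ?S" using c by simp
    show "\<forall>i\<in>?S. z i = 1 \<or> z i = -1"
    proof
      fix i assume "i \<in> ?S"
      then have "X i = 1 \<or> X i = -1" using vals by (auto simp: supp_def)
      then show "z i = 1 \<or> z i = -1" unfolding z_def using neg1_pow[of "pos ?S i"] by auto
    qed
  qed
  finally show ?thesis .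
qed

lemma alt_sum:
  assumes fin: "finite V" and A: "A \<subseteq> V" "card A = Suc n" and a: "a \<in> A"
  shows "(\<Sum>X\<in>{X. sv V X \<and> supp X = A \<and> X a = 1}. w1_pow n X) = 1"
proof -
  let ?T = "{X. sv V X \<and> supp X = A \<and> X a = 1}"
  have finA: "finite A" using A fin finite_subset by blast
  have finT: "finite ?T" using finite_sv[OF fin] by (rule finite_subset[rotated]) auto
  have "(\<Sum>X\<in>?T. w1_pow n X) = (\<Sum>X\<in>?T. if altp A X then 1 else 0)"
  proof (rule sum.cong)
    fix X assume X: "X \<in> ?T"
    then show "w1_pow n X = (if altp A X then 1 else 0)"
      using w1_pow_char[of X n] finA A sv_vals[of V X] by auto
  qed simp
  also have "\<dots> = of_nat (card {X\<in>?T. altp A X})" by (rule sum_indicator_bit[OF finT])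
  also have "{X\<in>?T. altp A X} = {(\<lambda>i. if i \<in> A then (-1)^pos A a * (-1)^pos A i else 0)}"
    (is "_ = {?X0}")
  proof
    have v0: "?X0 i \<in> {-1,0,1}" for i
      using neg1_pow[of "pos A a"] neg1_pow[of "pos A i"] by auto
    have s0: "supp ?X0 = A"
      using neg1_pow[of "pos A a"] neg1_pow by (auto simp: supp_def)
    have a0: "?X0 a = 1" using a neg1_pow[of "pos A a"] by auto
    have alt0: "altp A ?X0" unfolding altp_def
      using neg1_pow[of "pos A a"] by (intro exI[of _ "(-1)^pos A a"]) auto
    show "{?X0} \<subseteq> {X\<in>?T. altp A X}" using v0 s0 a0 alt0 A(1) by (auto simp: sv_def)
    show "{X\<in>?T. altp A X} \<subseteq> {?X0}"
    proof
      fix X assume X: "X \<in> {X\<in>?T. altp A X}"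
      then obtain \<sigma> where s: "\<sigma> = 1 \<or> \<sigma> = -1" "\<forall>i\<in>A. X i = \<sigma> * (-1)^pos A i"
        unfolding altp_def by blast
      have "1 = \<sigma> * (-1)^pos A a" using s(2) a X by auto
      then have sa: "\<sigma> = (-1)^pos A a" using neg1_pow[of "pos A a"] s(1) by auto
      have "X = ?X0"
      proof
        fix i show "X i = ?X0 i"
        proof (cases "i \<in> A")
          case True then show ?thesis using s(2) sa by simp
        next
          case False then show ?thesis using X by (auto simp: supp_def)
        qed
      qed
      then show "X \<in> {?X0}" by simp
    qed
  qed
  finally show ?thesis by simp
qed

context OMl
begin

lemma CM_sum:
  assumes A: "A \<subseteq> {1..m}" "card A = Suc (m - r)" and a: "a \<in> A"
  shows "(\<Sum>X\<in>{X. sv {1..m} X \<and> supp X = A \<and> X a = 1}. C_M C X) = 1"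
proof -
  let ?T = "{X. sv {1..m} X \<and> supp X = A \<and> X a = 1}"
  have finT: "finite ?T" using finite_sv[of "{1..m}"] by (rule finite_subset[rotated]) auto
  obtain Y where Y: "Y \<in> C" "supp Y = A" using existsC[OF A] by blast
  have "Y a \<noteq> 0" using Y a by (auto simp: supp_def)
  then have Ya: "Y a = 1 \<or> Y a = -1" using C_vals[OF Y(1), of a] by auto
  define Y' where "Y' = scl (Y a) Y"
  have Y'C: "Y' \<in> C" unfolding Y'_def using sclC[OF Y(1) Ya] .
  have sY': "supp Y' = A" unfolding Y'_def using supp_scl[of "Y a" Y] Y(2) \<open>Y a \<noteq> 0\<close> by simp
  have aY': "Y' a = 1" unfolding Y'_def scl_def using Ya by auto
  have "(\<Sum>X\<in>?T. C_M C X) = (\<Sum>X\<in>?T. if X \<in> C then 1 else 0)"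
    using C_M_eq[OF finite_C] by simp
  also have "\<dots> = of_nat (card {X\<in>?T. X \<in> C})" by (rule sum_indicator_bit[OF finT])
  also have "{X\<in>?T. X \<in> C} = {Y'}"
  proof
    show "{Y'} \<subseteq> {X\<in>?T. X \<in> C}" using Y'C sY' aY' C_sv by auto
    show "{X\<in>?T. X \<in> C} \<subseteq> {Y'}"
    proof
      fix X assume X: "X \<in> {X\<in>?T. X \<in> C}"
      then have "X = Y' \<or> X = negv Y'" using uniqC[of X Y'] Y'C sY' by auto
      moreover have "X \<noteq> negv Y'" using X aY' by (auto simp: negv_def)
      ultimately show "X \<in> {Y'}" by simp
    qed
  qed
  finally show ?thesis by simp
qed

lemma CM_equiv: "equivariant (C_M C)"
  unfolding equivariant_def
proof
  fix X
  have "negv X \<in> C \<longleftrightarrow> X \<in> C" using negC negv_negv by metis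
  then show "C_M C (negv X) = C_M C X" using C_M_eq[OF finite_C] by simp
qed

end

lemma faces_iff: "X \<in> faces m k \<longleftrightarrow> sv {1..m} X \<and> card (supp X) = Suc k"
  unfolding faces_def using signvec_sv by auto

theorem theorem4p1:
  fixes m r :: nat and C :: "(nat \<Rightarrow> int) set"
  assumes "r \<le> m"
    and "oriented_matroid_cocircuits m C"
    and "uniform_rank m r C"
  shows "equivariant (C_M C)
       \<and> is_cocycle m (m - r) (C_M C)
       \<and> equiv_cohomologous m (m - r) (C_M C) (w1_pow (m - r))"
proof -
  interpret OMl m r C using assms by (rule OMl.intro)
  define n where "n = m - r"
  have eq: "equivariant (C_M C)" by (rule CM_equiv)
  have coc: "is_cocycle m n (C_M C)"
    unfolding is_cocycle_def
  proof
    fix X assume "X \<in> faces m (Suc n)"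
    then have "sv {1..m} X" "card (supp X) = Suc (Suc (m - r))" using faces_iff n_def by auto
    then show "coboundary (C_M C) X = 0" unfolding coboundary_cob by (rule OMpar)
  qed
  have coh: "equiv_cohomologous m n (C_M C) (w1_pow n)"
  proof (cases "n = 0")
    case True
    show ?thesis unfolding equiv_cohomologous_def
    proof (intro exI[of _ "\<lambda>_. 0"] conjI ballI)
      show "equivariant (\<lambda>_. 0)" by (simp add: equivariant_def)
      fix X assume "X \<in> faces m n"
      then have X: "sv {1..m} X" "card (supp X) = 1" using faces_iff True by auto
      then obtain a where a: "supp X = {a}" by (auto simp: card_Suc_eq)
      have "supp X \<subseteq> {1..m}" using X(1) by (simp add: sv_def)
      then obtain Y where Y: "Y \<in> C" "supp Y = {a}" using existsC[of "supp X"] X(2) a True n_def by auto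
      have Xa: "X a = 1 \<or> X a = -1" using sv_vals[OF X(1), of a] a by (auto simp: supp_def)
      have Ya: "Y a = 1 \<or> Y a = -1" using C_vals[OF Y(1), of a] Y(2) by (auto simp: supp_def)
      have out: "X i = 0" "Y i = 0" if "i \<noteq> a" for i using a Y(2) that by (auto simp: supp_def)
      have "X = Y \<or> X = negv Y"
      proof (cases "X a = Y a")
        case True
        have "X = Y"
        proof
          fix i show "X i = Y i" by (cases "i = a") (use True out in auto)
        qed
        then show ?thesis by simp
      next
        case False
        then have "X a = - Y a" using Xa Ya by auto
        have "X = negv Y"
        proof
          fix i show "X i = negv Y i" by (cases "i = a") (use \<open>X a = - Y a\<close> out in \<open>auto simp: negv_def\<close>)
        qed
        then show ?thesis by simp
      qed
      then have "X \<in> C" using Y(1) negC by auto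
      then have "C_M C X = 1" using C_M_eq[OF finite_C] by simp
      then show "C_M C X - w1_pow n X = (if n = 0 then 0 else coboundary (\<lambda>_. 0) X)"
        using True by simp
    qed
  next
    case False
    define D where "D X = C_M C X + w1_pow n X" for X
    have eqD: "equivariant D" using eq w1_pow_equiv[of n] unfolding D_def equivariant_def by simp
    have "\<exists>c. equivariant c \<and> (\<forall>X. sv {1..m} X \<longrightarrow> card (supp X) = n+1 \<longrightarrow> D X = cob c X)"
    proof (rule EL[of "{1..m}" n D])
      show "finite {1..m}" by simp
      show "1 \<le> n" using False by simp
      show "equivariant D" by (rule eqD)
    next
      fix Y assume Y: "sv {1..m} Y" "card (supp Y) = n+2"
      have fin: "finite (supp Y)" using sv_finite_supp[OF _ Y(1)] by simp
      have "cob D Y = cob (C_M C) Y + cob (w1_pow n) Y" unfolding D_def by (rule cob_add)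
      also have "cob (C_M C) Y = 0" using OMpar[OF Y(1)] Y(2) n_def by simp
      also have "cob (w1_pow n) Y = 0" using w1_pow_cocycle[of Y n] Y sv_vals fin by auto
      finally show "cob D Y = 0" by simp
    next
      fix A a assume A: "A \<subseteq> {1..m}" "card A = n+1" "a \<in> A"
      have "(\<Sum>X\<in>{X. sv {1..m} X \<and> supp X = A \<and> X a = 1}. D X)
          = (\<Sum>X\<in>{X. sv {1..m} X \<and> supp X = A \<and> X a = 1}. C_M C X)
          + (\<Sum>X\<in>{X. sv {1..m} X \<and> supp X = A \<and> X a = 1}. w1_pow n X)"
        unfolding D_def by (rule sum.distrib)
      also have "(\<Sum>X\<in>{X. sv {1..m} X \<and> supp X = A \<and> X a = 1}. C_M C X) = 1"
        using CM_sum[OF A(1) _ A(3)] A(2) n_def by simp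
      also have "(\<Sum>X\<in>{X. sv {1..m} X \<and> supp X = A \<and> X a = 1}. w1_pow n X) = 1"
        using alt_sum[of "{1..m}" A n a] A by simp
      finally show "(\<Sum>X\<in>{X. sv {1..m} X \<and> supp X = A \<and> X a = 1}. D X) = 0" by simp
    qed
    then obtain c where c: "equivariant c"
      "\<And>X. sv {1..m} X \<Longrightarrow> card (supp X) = n+1 \<Longrightarrow> D X = cob c X" by blast
    show ?thesis unfolding equiv_cohomologous_def
    proof (intro exI[of _ c] conjI ballI c(1))
      fix X assume "X \<in> faces m n"
      then have X: "sv {1..m} X" "card (supp X) = n+1" using faces_iff by auto
      have "C_M C X - w1_pow n X = D X" unfolding D_def by simp
      also have "\<dots> = coboundary c X" using c(2)[OF X] coboundary_cob by simp
      finally show "C_M C X - w1_pow n X = (if n = 0 then 0 else coboundary c X)"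
        using False by simp
    qed
  qed
  show ?thesis using eq coc coh n_def by simp
qed

end
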